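(* A tetrahedron $\mathcal T$ has an obtuse cycle if and only if there exists $O\in\operatorname{int}\mathcal T$ such that $(\mathcal T,O)$ is mono-unstable.
   Context: An obtuse cycle of a tetrahedron is a labelling $A,B,C,D$ of its four vertices (giving the edge cycle $A-B-C-D-A$) such that the face angles $\angle ABC$, $\angle BCD$ and $\angle CDA$ are all obtuse. For $O\in\operatorname{int}\mathcal T$, $(\mathcal T,O)$ is in (unstable) equilibrium on a vertex $V$ if the plane perpendicular to $[O,V]$ at $V$ supports $\mathcal T$; $(\mathcal T,O)$ is mono-unstable if exactly one vertex carries such an equilibrium. *)

theory Defs
  imports "HOL-Analysis.Analysis"
begin

text \<open>A tetrahedron in R^3 is given by its vertex set: four affinely independent points.
  The solid tetrahedron is the convex hull of its vertices.\<close>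
definition is_tetrahedron :: "(real^3) set \<Rightarrow> bool" where
  "is_tetrahedron V \<longleftrightarrow> finite V \<and> card V = 4 \<and> \<not> affine_dependent V"

definition obtuse_angle :: "real^3 \<Rightarrow> real^3 \<Rightarrow> real^3 \<Rightarrow> bool" where
  "obtuse_angle A B C \<longleftrightarrow> (A - B) \<bullet> (C - B) < 0"

definition has_obtuse_cycle :: "(real^3) set \<Rightarrow> bool" where
  "has_obtuse_cycle V \<longleftrightarrow>
     (\<exists>A B C D. V = {A, B, C, D} \<and> distinct [A, B, C, D] \<and>
        obtuse_angle A B C \<and> obtuse_angle B C D \<and> obtuse_angle C D A)"

definition supports_plane :: "real^3 \<Rightarrow> real^3 \<Rightarrow> (real^3) set \<Rightarrow> bool" where
  "supports_plane P n S \<longleftrightarrow> (\<forall>x\<in>S. (x - P) \<bullet> n \<le> 0) \<or> (\<forall>x\<in>S. (x - P) \<bullet> n \<ge> 0)"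

definition equilibrium_on :: "(real^3) set \<Rightarrow> real^3 \<Rightarrow> real^3 \<Rightarrow> bool" where
  "equilibrium_on V c v \<longleftrightarrow> supports_plane v (v - c) (convex hull V)"

definition mono_unstable :: "(real^3) set \<Rightarrow> real^3 \<Rightarrow> bool" where
  "mono_unstable V c \<longleftrightarrow> (\<exists>!v. v \<in> V \<and> equilibrium_on V c v)"

end

theory Submission
  imports Defs
begin

lemma sq_pos: fixes X Y :: "real^3" assumes "X \<noteq> Y" shows "0 < X \<bullet> X - 2 * (X \<bullet> Y) + Y \<bullet> Y"
proof -
  have "0 < (X - Y) \<bullet> (X - Y)" using assms by simp
  then show ?thesis by (simp add: inner_diff_left inner_diff_right inner_commute)
qed

lemma comb_core:
  fixes A B C D :: "real^3"
  assumes dist: "distinct [A,B,C,D]"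
    and hB: "obtuse_angle A B C \<or> obtuse_angle A B D \<or> obtuse_angle C B D"
    and hC: "obtuse_angle A C B \<or> obtuse_angle A C D \<or> obtuse_angle B C D"
    and hD: "obtuse_angle A D B \<or> obtuse_angle A D C \<or> obtuse_angle B D C"
  shows "(obtuse_angle A B C \<and> obtuse_angle B C D \<and> obtuse_angle C D A) \<or>
    (obtuse_angle A B D \<and> obtuse_angle B D C \<and> obtuse_angle D C A) \<or>
    (obtuse_angle A C B \<and> obtuse_angle C B D \<and> obtuse_angle B D A) \<or>
    (obtuse_angle A C D \<and> obtuse_angle C D B \<and> obtuse_angle D B A) \<or>
    (obtuse_angle A D B \<and> obtuse_angle D B C \<and> obtuse_angle B C A) \<or>
    (obtuse_angle A D C \<and> obtuse_angle D C B \<and> obtuse_angle C B A) \<or>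
    (obtuse_angle B A C \<and> obtuse_angle A C D \<and> obtuse_angle C D B) \<or>
    (obtuse_angle B A D \<and> obtuse_angle A D C \<and> obtuse_angle D C B) \<or>
    (obtuse_angle B C A \<and> obtuse_angle C A D \<and> obtuse_angle A D B) \<or>
    (obtuse_angle B C D \<and> obtuse_angle C D A \<and> obtuse_angle D A B) \<or>
    (obtuse_angle B D A \<and> obtuse_angle D A C \<and> obtuse_angle A C B) \<or>
    (obtuse_angle B D C \<and> obtuse_angle D C A \<and> obtuse_angle C A B) \<or>
    (obtuse_angle C A B \<and> obtuse_angle A B D \<and> obtuse_angle B D C) \<or>
    (obtuse_angle C A D \<and> obtuse_angle A D B \<and> obtuse_angle D B C) \<or>
    (obtuse_angle C B A \<and> obtuse_angle B A D \<and> obtuse_angle A D C) \<or>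
    (obtuse_angle C B D \<and> obtuse_angle B D A \<and> obtuse_angle D A C) \<or>
    (obtuse_angle C D A \<and> obtuse_angle D A B \<and> obtuse_angle A B C) \<or>
    (obtuse_angle C D B \<and> obtuse_angle D B A \<and> obtuse_angle B A C) \<or>
    (obtuse_angle D A B \<and> obtuse_angle A B C \<and> obtuse_angle B C D) \<or>
    (obtuse_angle D A C \<and> obtuse_angle A C B \<and> obtuse_angle C B D) \<or>
    (obtuse_angle D B A \<and> obtuse_angle B A C \<and> obtuse_angle A C D) \<or>
    (obtuse_angle D B C \<and> obtuse_angle B C A \<and> obtuse_angle C A D) \<or>
    (obtuse_angle D C A \<and> obtuse_angle C A B \<and> obtuse_angle A B D) \<or>
    (obtuse_angle D C B \<and> obtuse_angle C B A \<and> obtuse_angle B A D)"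
proof -
  define gAA where "gAA = inner A A"
  define gAB where "gAB = inner A B"
  define gAC where "gAC = inner A C"
  define gAD where "gAD = inner A D"
  define gBB where "gBB = inner B B"
  define gBC where "gBC = inner B C"
  define gBD where "gBD = inner B D"
  define gCC where "gCC = inner C C"
  define gCD where "gCD = inner C D"
  define gDD where "gDD = inner D D"
  have E: "obtuse_angle A B C \<longleftrightarrow> (gAC - gAB - gBC + gBB < 0)"
    "obtuse_angle A B D \<longleftrightarrow> (gAD - gAB - gBD + gBB < 0)"
    "obtuse_angle A C B \<longleftrightarrow> (gAB - gAC - gBC + gCC < 0)"
    "obtuse_angle A C D \<longleftrightarrow> (gAD - gAC - gCD + gCC < 0)"
    "obtuse_angle A D B \<longleftrightarrow> (gAB - gAD - gBD + gDD < 0)"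
    "obtuse_angle A D C \<longleftrightarrow> (gAC - gAD - gCD + gDD < 0)"
    "obtuse_angle B A C \<longleftrightarrow> (gBC - gAB - gAC + gAA < 0)"
    "obtuse_angle B A D \<longleftrightarrow> (gBD - gAB - gAD + gAA < 0)"
    "obtuse_angle B C A \<longleftrightarrow> (gAB - gBC - gAC + gCC < 0)"
    "obtuse_angle B C D \<longleftrightarrow> (gBD - gBC - gCD + gCC < 0)"
    "obtuse_angle B D A \<longleftrightarrow> (gAB - gBD - gAD + gDD < 0)"
    "obtuse_angle B D C \<longleftrightarrow> (gBC - gBD - gCD + gDD < 0)"
    "obtuse_angle C A B \<longleftrightarrow> (gBC - gAC - gAB + gAA < 0)"
    "obtuse_angle C A D \<longleftrightarrow> (gCD - gAC - gAD + gAA < 0)"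
    "obtuse_angle C B A \<longleftrightarrow> (gAC - gBC - gAB + gBB < 0)"
    "obtuse_angle C B D \<longleftrightarrow> (gCD - gBC - gBD + gBB < 0)"
    "obtuse_angle C D A \<longleftrightarrow> (gAC - gCD - gAD + gDD < 0)"
    "obtuse_angle C D B \<longleftrightarrow> (gBC - gCD - gBD + gDD < 0)"
    "obtuse_angle D A B \<longleftrightarrow> (gBD - gAD - gAB + gAA < 0)"
    "obtuse_angle D A C \<longleftrightarrow> (gCD - gAD - gAC + gAA < 0)"
    "obtuse_angle D B A \<longleftrightarrow> (gAD - gBD - gAB + gBB < 0)"
    "obtuse_angle D B C \<longleftrightarrow> (gCD - gBD - gBC + gBB < 0)"
    "obtuse_angle D C A \<longleftrightarrow> (gAD - gCD - gAC + gCC < 0)"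
    "obtuse_angle D C B \<longleftrightarrow> (gBD - gCD - gBC + gCC < 0)"
    apply (simp_all add: obtuse_angle_def gAA_def gAB_def gAC_def gAD_def gBB_def gBC_def gBD_def gCC_def gCD_def gDD_def inner_diff_left inner_diff_right inner_commute)
    apply linarith+
    done
  have N: "gAA - 2 * gAB + gBB > 0"
    "gAA - 2 * gAC + gCC > 0"
    "gAA - 2 * gAD + gDD > 0"
    "gBB - 2 * gBC + gCC > 0"
    "gBB - 2 * gBD + gDD > 0"
    "gCC - 2 * gCD + gDD > 0"
    using dist by (simp_all add: sq_pos gAA_def gAB_def gAC_def gAD_def gBB_def gBC_def gBD_def gCC_def gCD_def gDD_def inner_diff_left inner_diff_right inner_commute)
  show ?thesis using hB hC hD N unfolding E by smt
qed

lemma obt_sym: "obtuse_angle x y z \<longleftrightarrow> obtuse_angle z y x"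
  by (simp add: obtuse_angle_def inner_commute)

lemma cyc_intro:
  assumes "obtuse_angle a b c" "obtuse_angle b c d" "obtuse_angle c d a"
    "distinct [a,b,c,d]" "S = {a,b,c,d}"
  shows "has_obtuse_cycle S"
  unfolding has_obtuse_cycle_def using assms by blast

lemma comb:
  fixes A B C D :: "real^3"
  assumes dist: "distinct [A,B,C,D]"
    and hB: "\<exists>w\<in>{A,C,D}. \<exists>x\<in>{A,C,D}. w \<noteq> x \<and> obtuse_angle w B x"
    and hC: "\<exists>w\<in>{A,B,D}. \<exists>x\<in>{A,B,D}. w \<noteq> x \<and> obtuse_angle w C x"
    and hD: "\<exists>w\<in>{A,B,C}. \<exists>x\<in>{A,B,C}. w \<noteq> x \<and> obtuse_angle w D x"
  shows "has_obtuse_cycle {A,B,C,D}"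
proof -
  have hB': "obtuse_angle A B C \<or> obtuse_angle A B D \<or> obtuse_angle C B D"
    using hB obt_sym by blast
  have hC': "obtuse_angle A C B \<or> obtuse_angle A C D \<or> obtuse_angle B C D"
    using hC obt_sym by blast
  have hD': "obtuse_angle A D B \<or> obtuse_angle A D C \<or> obtuse_angle B D C"
    using hD obt_sym by blast
  from comb_core[OF dist hB' hC' hD'] show ?thesis
    using dist apply (elim disjE conjE)
    apply (rule cyc_intro, assumption, assumption, assumption, simp, auto)+
    done
qed

lemma eq_of_all:
  assumes "\<forall>w\<in>V. inner (w - v) (v - c) \<le> 0"
  shows "equilibrium_on V c v"
proof -
  have "convex hull V \<subseteq> {x. inner (v - c) x \<le> inner (v - c) v}"
  proof (rule hull_minimal)
    show "V \<subseteq> {x. inner (v - c) x \<le> inner (v - c) v}"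
      using assms by (auto simp: inner_diff_left inner_commute)
    show "convex {x. inner (v - c) x \<le> inner (v - c) v}"
      by (rule convex_halfspace_le)
  qed
  then have "\<forall>x\<in>convex hull V. (x - v) \<bullet> (v - c) \<le> 0"
    by (auto simp: inner_diff_left inner_commute)
  then show ?thesis unfolding equilibrium_on_def supports_plane_def by blast
qed

lemma exists_eq:
  fixes V :: "(real^3) set"
  assumes "finite V" "V \<noteq> {}"
  shows "\<exists>v\<in>V. equilibrium_on V c v"
proof -
  define f where "f w = inner (w - c) (w - c)" for w
  define m where "m = Max (f ` V)"
  have "m \<in> f ` V" unfolding m_def using assms by simp
  then obtain v where v: "v \<in> V" "f v = m" by auto
  have le: "f w \<le> f v" if "w \<in> V" for w
    using v that assms unfolding m_def by simp
  have "\<forall>w\<in>V. inner (w - v) (v - c) \<le> 0"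
  proof
    fix w assume "w \<in> V"
    then have "f w \<le> f v" by (rule le)
    moreover have "0 \<le> inner (w - v) (w - v)" by simp
    ultimately show "inner (w - v) (v - c) \<le> 0"
      unfolding f_def by (simp add: inner_diff_left inner_diff_right inner_commute)
  qed
  then show ?thesis using v eq_of_all by blast
qed

lemma noneq:
  assumes "c \<in> convex hull V" "w \<in> V" "inner (w - v) (c - v) < 0"
  shows "\<not> equilibrium_on V c v"
proof
  assume e: "equilibrium_on V c v"
  have cv: "c \<noteq> v" using assms(3) by auto
  have w: "w \<in> convex hull V" using assms(2) by (simp add: hull_inc)
  have "(w - v) \<bullet> (v - c) > 0" using assms(3)
    by (metis inner_minus_right minus_diff_eq neg_less_0_iff_less)
  moreover have "(c - v) \<bullet> (v - c) < 0"
  proof -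
    have "0 < (c - v) \<bullet> (c - v)" using cv by simp
    then show ?thesis by (metis inner_minus_right minus_diff_eq neg_less_0_iff_less)
  qed
  ultimately show False using e w assms(1)
    unfolding equilibrium_on_def supports_plane_def by force
qed

lemma NE:
  fixes V :: "(real^3) set"
  assumes T: "is_tetrahedron V" and c: "c \<in> interior (convex hull V)"
    and v: "v \<in> V" and ne: "\<not> equilibrium_on V c v"
  shows "\<exists>w\<in>V. \<exists>x\<in>V. w \<noteq> v \<and> x \<noteq> v \<and> w \<noteq> x \<and> obtuse_angle w v x"
proof -
  have fin: "finite V" and card: "card V = 4" and ai: "\<not> affine_dependent V"
    using T unfolding is_tetrahedron_def by auto
  have "\<not> (\<forall>w\<in>V. inner (w - v) (v - c) \<le> 0)" using ne eq_of_all by blast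
  then obtain w where w0: "w \<in> V" "\<not> inner (w - v) (v - c) \<le> 0" by blast
  have w: "w \<in> V" "inner (w - v) (v - c) > 0" using w0 by auto
  have ii: "interior (convex hull V) = {y. \<exists>u. (\<forall>x \<in> V. 0 < u x) \<and> sum u V = 1 \<and> (\<Sum>x\<in>V. u x *\<^sub>R x) = y}"
    using interior_convex_hull_explicit_minimal[OF ai] card by simp
  obtain u where u: "\<forall>x \<in> V. 0 < u x" "sum u V = 1" "(\<Sum>x\<in>V. u x *\<^sub>R x) = c"
    using c unfolding ii by blast
  have "(\<Sum>x\<in>V. u x *\<^sub>R (x - v)) = (\<Sum>x\<in>V. u x *\<^sub>R x) - (\<Sum>x\<in>V. u x *\<^sub>R v)"
    by (simp only: scaleR_diff_right sum_subtractf)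
  also have "(\<Sum>x\<in>V. u x *\<^sub>R v) = (sum u V) *\<^sub>R v"
    by (rule scaleR_sum_left[symmetric])
  finally have cv: "c - v = (\<Sum>x\<in>V. u x *\<^sub>R (x - v))"
    using u(2) u(3) by simp
  have "inner (w - v) (c - v) = (\<Sum>x\<in>V. u x * inner (w - v) (x - v))"
    unfolding cv by (simp only: inner_sum_right inner_scaleR_right)
  moreover have "inner (w - v) (c - v) < 0"
    using w(2) by (metis inner_minus_right minus_diff_eq neg_less_0_iff_less)
  ultimately have neg: "(\<Sum>x\<in>V. u x * inner (w - v) (x - v)) < 0" by simp
  have "\<exists>x\<in>V. inner (w - v) (x - v) < 0"
  proof (rule ccontr)
    assume "\<not> (\<exists>x\<in>V. inner (w - v) (x - v) < 0)"
    then have "\<forall>x\<in>V. 0 \<le> u x * inner (w - v) (x - v)"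
      using u(1) by (meson less_imp_le mult_nonneg_nonneg not_less)
    then have "0 \<le> (\<Sum>x\<in>V. u x * inner (w - v) (x - v))"
      by (intro sum_nonneg) blast
    then show False using neg by simp
  qed
  then obtain x where x: "x \<in> V" "inner (w - v) (x - v) < 0" by blast
  have "w \<noteq> v" using w(2) by auto
  moreover have "x \<noteq> v" using x(2) by auto
  moreover have "w \<noteq> x" using x(2) inner_ge_zero[of "x - v"] by force
  ultimately show ?thesis using w(1) x unfolding obtuse_angle_def by blast
qed

lemma small: "(0::real) < p \<Longrightarrow> \<exists>d>0. \<forall>t. 0 < t \<and> t < d \<longrightarrow> t * K < p"
proof -
  assume p: "0 < p"
  define d where "d = p / (\<bar>K\<bar> + 1)"
  have d: "d > 0" using p by (simp add: d_def)
  have "t * K < p" if "0 < t" "t < d" for t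
  proof -
    have "t * K \<le> t * \<bar>K\<bar>" using that by (simp add: mult_left_mono)
    also have "\<dots> \<le> t * (\<bar>K\<bar> + 1)" using that by simp
    also have "\<dots> < d * (\<bar>K\<bar> + 1)" using that by (simp add: mult_strict_right_mono add_pos_nonneg)
    also have "\<dots> = p" by (simp add: d_def add_pos_nonneg)
    finally show ?thesis .
  qed
  then show ?thesis using d by blast
qed

lemma forward:
  fixes A B C D :: "real^3"
  assumes T: "is_tetrahedron {A,B,C,D}" and dist: "distinct [A,B,C,D]"
    and o1: "obtuse_angle A B C" and o2: "obtuse_angle B C D" and o3: "obtuse_angle C D A"
  shows "\<exists>c \<in> interior (convex hull {A,B,C,D}). mono_unstable {A,B,C,D} c"
proof -
  let ?V = "{A,B,C,D}"
  have ai: "\<not> affine_dependent ?V" and card: "card ?V = 4"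
    using T unfolding is_tetrahedron_def by auto
  define K where "K = inner (D - C) (A - C) + inner (D - C) (D - C)"
  have p2: "0 < - inner (D - C) (B - C)" using o2 unfolding obtuse_angle_def
    by (simp add: inner_commute)
  obtain d where d: "d > 0" "\<forall>t. 0 < t \<and> t < d \<longrightarrow> t * K < - inner (D - C) (B - C)"
    using small[OF p2] by blast
  define \<delta> where "\<delta> = min (1/2) (d/2)"
  have \<delta>: "0 < \<delta>" "\<delta> < 1" "\<delta> * K < - inner (D - C) (B - C)"
    using d unfolding \<delta>_def by auto
  define w where "w = (B - C) + \<delta> *\<^sub>R ((A - C) + (D - C))"
  have p1: "0 < - inner (A - B) (C - B)" using o1 unfolding obtuse_angle_def by simp
  have p3: "0 < - inner (A - D) (C - D)" using o3 unfolding obtuse_angle_def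
    by (simp add: inner_commute)
  obtain e1 where e1: "e1 > 0" "\<forall>t. 0 < t \<and> t < e1 \<longrightarrow> t * inner (A - B) w < - inner (A - B) (C - B)"
    using small[OF p1] by blast
  obtain e2 where e2: "e2 > 0" "\<forall>t. 0 < t \<and> t < e2 \<longrightarrow> t * inner (A - D) w < - inner (A - D) (C - D)"
    using small[OF p3] by blast
  define \<epsilon> where "\<epsilon> = min (1/4) (min (e1/2) (e2/2))"
  have \<epsilon>: "0 < \<epsilon>" "\<epsilon> \<le> 1/4" "\<epsilon> * inner (A - B) w < - inner (A - B) (C - B)"
    "\<epsilon> * inner (A - D) w < - inner (A - D) (C - D)"
    using e1 e2 unfolding \<epsilon>_def by auto
  define c where "c = C + \<epsilon> *\<^sub>R w"
  define u where "u x = (if x = A then \<epsilon> * \<delta> else if x = B then \<epsilon> else if x = C then 1 - \<epsilon> - 2 * \<epsilon> * \<delta> else \<epsilon> * \<delta>)" for x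
  have upos: "\<forall>x\<in>?V. 0 < u x"
  proof -
    have "\<epsilon> * \<delta> < \<epsilon> * 1" using \<epsilon> \<delta> by (intro mult_strict_left_mono) auto
    then have "0 < 1 - \<epsilon> - 2 * \<epsilon> * \<delta>" using \<epsilon> by linarith
    then show ?thesis using \<epsilon> \<delta> dist by (auto simp: u_def)
  qed
  have dd: "A \<noteq> B" "A \<noteq> C" "A \<noteq> D" "B \<noteq> C" "B \<noteq> D" "C \<noteq> D" using dist by auto
  have "sum u ?V = u A + u B + u C + u D" using dd by (simp add: add.assoc)
  also have "\<dots> = 1" using dd by (simp add: u_def algebra_simps)
  finally have usum: "sum u ?V = 1" .
  have "(\<Sum>x\<in>?V. u x *\<^sub>R x) = (\<epsilon> * \<delta>) *\<^sub>R A + \<epsilon> *\<^sub>R B + (1 - \<epsilon> - 2 * \<epsilon> * \<delta>) *\<^sub>R C + (\<epsilon> * \<delta>) *\<^sub>R D"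
  proof -
    have "(\<Sum>x\<in>?V. u x *\<^sub>R x) = u A *\<^sub>R A + u B *\<^sub>R B + u C *\<^sub>R C + u D *\<^sub>R D"
      using dd by (simp add: add.assoc)
    also have "\<dots> = (\<epsilon> * \<delta>) *\<^sub>R A + \<epsilon> *\<^sub>R B + (1 - \<epsilon> - 2 * \<epsilon> * \<delta>) *\<^sub>R C + (\<epsilon> * \<delta>) *\<^sub>R D"
      using dd by (simp add: u_def)
    finally show ?thesis .
  qed
  also have "\<dots> = c" unfolding c_def w_def
    apply (rule vec_eq_iff[THEN iffD2], rule allI)
    apply simp
    apply (simp add: algebra_simps)
    done
  finally have ucomb: "(\<Sum>x\<in>?V. u x *\<^sub>R x) = c" .
  have int: "c \<in> interior (convex hull ?V)"
    using interior_convex_hull_explicit_minimal[OF ai] card upos usum ucomb by auto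
  have hull: "c \<in> convex hull ?V" using int interior_subset by blast
  have nB: "\<not> equilibrium_on ?V c B"
  proof (rule noneq[OF hull, of A])
    have eq: "c - B = (C - B) + \<epsilon> *\<^sub>R w" by (simp add: c_def algebra_simps)
    have "inner (A - B) (c - B) = inner (A - B) (C - B) + \<epsilon> * inner (A - B) w"
      by (simp only: eq inner_add_right inner_scaleR_right)
    then show "inner (A - B) (c - B) < 0" using \<epsilon> by linarith
  qed simp
  have nD: "\<not> equilibrium_on ?V c D"
  proof (rule noneq[OF hull, of A])
    have eq: "c - D = (C - D) + \<epsilon> *\<^sub>R w" by (simp add: c_def algebra_simps)
    have "inner (A - D) (c - D) = inner (A - D) (C - D) + \<epsilon> * inner (A - D) w"
      by (simp only: eq inner_add_right inner_scaleR_right)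
    then show "inner (A - D) (c - D) < 0" using \<epsilon> by linarith
  qed simp
  have nC: "\<not> equilibrium_on ?V c C"
  proof (rule noneq[OF hull, of D])
    have "inner (D - C) w = inner (D - C) (B - C) + \<delta> * K"
      by (simp only: w_def K_def inner_add_right inner_scaleR_right)
    then have "inner (D - C) w < 0" using \<delta> by linarith
    then show "inner (D - C) (c - C) < 0" using \<epsilon>
      by (simp add: c_def mult_pos_neg)
  qed simp
  obtain v where v: "v \<in> ?V" "equilibrium_on ?V c v"
    using exists_eq[of ?V c] by auto
  have vA: "v = A" using v nB nC nD by auto
  have "mono_unstable ?V c"
    unfolding mono_unstable_def
    by (rule ex1I[of _ A]) (use v vA nB nC nD in auto)
  then show ?thesis using int by blast
qed

theorem theorem1p10:
  fixes V :: "(real^3) set"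
  assumes "is_tetrahedron V"
  shows "has_obtuse_cycle V \<longleftrightarrow>
         (\<exists>c \<in> interior (convex hull V). mono_unstable V c)"
proof
  assume "has_obtuse_cycle V"
  then obtain A B C D where V: "V = {A,B,C,D}" "distinct [A,B,C,D]"
    "obtuse_angle A B C" "obtuse_angle B C D" "obtuse_angle C D A"
    unfolding has_obtuse_cycle_def by blast
  show "\<exists>c \<in> interior (convex hull V). mono_unstable V c"
    using forward[of A B C D] V assms by simp
next
  assume "\<exists>c \<in> interior (convex hull V). mono_unstable V c"
  then obtain c where c: "c \<in> interior (convex hull V)" and mu: "mono_unstable V c" by blast
  obtain A where A: "A \<in> V" "equilibrium_on V c A"
    and uq: "\<And>v. v \<in> V \<Longrightarrow> equilibrium_on V c v \<Longrightarrow> v = A"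
    using mu unfolding mono_unstable_def by blast
  have fin: "finite V" and card: "card V = 4"
    using assms unfolding is_tetrahedron_def by auto
  have "card (V - {A}) = 3" using card A fin by simp
  then obtain B C D where BCD: "V - {A} = {B,C,D}" "B \<noteq> C" "C \<noteq> D" "B \<noteq> D"
    by (auto simp: card_3_iff)
  have V: "V = {A,B,C,D}" using BCD A by auto
  have dist: "distinct [A,B,C,D]" using BCD by auto
  have nB: "\<not> equilibrium_on V c B" using uq dist V by auto
  have nC: "\<not> equilibrium_on V c C" using uq dist V by auto
  have nD: "\<not> equilibrium_on V c D" using uq dist V by auto
  have hB: "\<exists>w\<in>{A,C,D}. \<exists>x\<in>{A,C,D}. w \<noteq> x \<and> obtuse_angle w B x"
    using NE[OF assms c _ nB] V by auto
  have hC: "\<exists>w\<in>{A,B,D}. \<exists>x\<in>{A,B,D}. w \<noteq> x \<and> obtuse_angle w C x"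
    using NE[OF assms c _ nC] V by auto
  have hD: "\<exists>w\<in>{A,B,C}. \<exists>x\<in>{A,B,C}. w \<noteq> x \<and> obtuse_angle w D x"
    using NE[OF assms c _ nD] V by auto
  show "has_obtuse_cycle V" using comb[OF dist hB hC hD] V by simp
qed

end
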